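(* Let $A$ be a nonempty finite set of $n$ alternatives and let $C$ be a choice rule on $A$ that is (capacity-constrained) lexicographic for a priority profile $(\succ_1,\dots,\succ_n)$. Let $A_1=A$ and, for $t\in\{2,\dots,n\}$, $A_t=A\setminus C(A,t-1)$. Then $C$ is lexicographic for another priority profile $(\succ'_1,\dots,\succ'_n)$ if and only if $\succ_1=\succ'_1$ and, for each $t\in\{1,\dots,n\}$, the restrictions of $\succ_t$ and $\succ'_t$ to $A_t$ coincide.
   Context: Let $\mathcal{A}$ be the set of all nonempty subsets of $A$. A choice rule is a map $C$ assigning to each $(S,q)\in\mathcal{A}\times\{1,\dots,n\}$ a nonempty set $C(S,q)\subseteq S$ with $|C(S,q)|\le q$. A priority ordering is a complete, transitive and antisymmetric binary relation on $A$; a priority profile is a list $(\succ_1,\dots,\succ_n)$ of $n$ priority orderings. $C$ is (capacity-constrained) lexicographic for $(\succ_1,\dots,\succ_n)$ if for every $(S,q)$, $C(S,q)$ is obtained by choosing the $\succ_1$-highest alternative in $S$, then the $\succ_2$-highest alternative among the remaining ones, and so on, until $q$ alternatives are chosen or no alternative is left. *)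

theory Defs
  imports Main
begin

text \<open>A priority ordering on A: a complete, transitive, antisymmetric relation on A.
  (x, y) \<in> r means "x has priority at least as high as y" (reflexive by completeness).\<close>
definition priority_ordering :: "'a set \<Rightarrow> 'a rel \<Rightarrow> bool" where
  "priority_ordering A r \<longleftrightarrow> r \<subseteq> A \<times> A
     \<and> (\<forall>x\<in>A. \<forall>y\<in>A. (x, y) \<in> r \<or> (y, x) \<in> r)
     \<and> (\<forall>x y z. (x, y) \<in> r \<longrightarrow> (y, z) \<in> r \<longrightarrow> (x, z) \<in> r)
     \<and> (\<forall>x y. (x, y) \<in> r \<longrightarrow> (y, x) \<in> r \<longrightarrow> x = y)"

definition priority_profile :: "'a set \<Rightarrow> nat \<Rightarrow> (nat \<Rightarrow> 'a rel) \<Rightarrow> bool" where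
  "priority_profile A n P \<longleftrightarrow> (\<forall>t\<in>{1..n}. priority_ordering A (P t))"

definition choice_rule :: "'a set \<Rightarrow> nat \<Rightarrow> ('a set \<Rightarrow> nat \<Rightarrow> 'a set) \<Rightarrow> bool" where
  "choice_rule A n C \<longleftrightarrow> (\<forall>S q. S \<subseteq> A \<and> S \<noteq> {} \<and> q \<in> {1..n} \<longrightarrow>
      C S q \<noteq> {} \<and> C S q \<subseteq> S \<and> card (C S q) \<le> q)"

definition top_of :: "'a rel \<Rightarrow> 'a set \<Rightarrow> 'a" where
  "top_of r R = (THE x. x \<in> R \<and> (\<forall>y\<in>R. (x, y) \<in> r))"

fun lex_sel :: "(nat \<Rightarrow> 'a rel) \<Rightarrow> 'a set \<Rightarrow> nat \<Rightarrow> 'a set" where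
  "lex_sel P S 0 = {}"
| "lex_sel P S (Suc k) =
     (if S - lex_sel P S k = {} then lex_sel P S k
      else insert (top_of (P (Suc k)) (S - lex_sel P S k)) (lex_sel P S k))"

definition lexicographic :: "'a set \<Rightarrow> nat \<Rightarrow> ('a set \<Rightarrow> nat \<Rightarrow> 'a set) \<Rightarrow> (nat \<Rightarrow> 'a rel) \<Rightarrow> bool" where
  "lexicographic A n C P \<longleftrightarrow> (\<forall>S q. S \<subseteq> A \<and> S \<noteq> {} \<and> q \<in> {1..n} \<longrightarrow> C S q = lex_sel P S q)"

definition restr :: "'a rel \<Rightarrow> 'a set \<Rightarrow> 'a rel" where
  "restr r B = r \<inter> (B \<times> B)"

end

theory Submission
  imports Defs
begin

lemma po_sub: "priority_ordering A r \<Longrightarrow> r \<subseteq> A \<times> A"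
  unfolding priority_ordering_def by (elim conjE)

lemma po_tot: "priority_ordering A r \<Longrightarrow> x \<in> A \<Longrightarrow> y \<in> A \<Longrightarrow> (x, y) \<in> r \<or> (y, x) \<in> r"
  unfolding priority_ordering_def by (elim conjE) (drule bspec, assumption, drule bspec, assumption, assumption)

lemma po_refl: "priority_ordering A r \<Longrightarrow> x \<in> A \<Longrightarrow> (x, x) \<in> r"
  using po_tot by fastforce

lemma po_trans: "priority_ordering A r \<Longrightarrow> (x, y) \<in> r \<Longrightarrow> (y, z) \<in> r \<Longrightarrow> (x, z) \<in> r"
  unfolding priority_ordering_def by (elim conjE) (erule allE[of _ x], erule allE[of _ y], erule allE[of _ z], simp)

lemma po_anti: "priority_ordering A r \<Longrightarrow> (x, y) \<in> r \<Longrightarrow> (y, x) \<in> r \<Longrightarrow> x = y"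
  unfolding priority_ordering_def by (elim conjE) (erule allE[of _ x], erule allE[of _ y], simp)

lemma top_eq:
  assumes "priority_ordering A r" "x \<in> R" "\<forall>y\<in>R. (x, y) \<in> r"
  shows "top_of r R = x"
  unfolding top_of_def
proof (rule the_equality)
  show "x \<in> R \<and> (\<forall>y\<in>R. (x, y) \<in> r)" using assms by blast
next
  fix z assume "z \<in> R \<and> (\<forall>y\<in>R. (z, y) \<in> r)"
  then show "z = x" using assms po_anti[OF assms(1), of z x] by blast
qed

lemma top_ex:
  assumes "priority_ordering A r" "finite R" "R \<noteq> {}" "R \<subseteq> A"
  shows "\<exists>x\<in>R. \<forall>y\<in>R. (x, y) \<in> r"
  using assms(2,3,4)
proof (induction R rule: finite_ne_induct)
  case (singleton x)
  then show ?case using po_refl[OF assms(1)] by blast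
next
  case (insert a F)
  then obtain x where x: "x \<in> F" "\<forall>y\<in>F. (x, y) \<in> r" by auto
  have "a \<in> A" "x \<in> A" using insert x by auto
  have tr: "\<And>u v w. (u, v) \<in> r \<Longrightarrow> (v, w) \<in> r \<Longrightarrow> (u, w) \<in> r"
    using po_trans[OF assms(1)] by blast
  have aa: "(a, a) \<in> r" using \<open>a \<in> A\<close> po_refl[OF assms(1)] by blast
  have "(a, x) \<in> r \<or> (x, a) \<in> r" using \<open>a \<in> A\<close> \<open>x \<in> A\<close> po_tot[OF assms(1)] by blast
  then show ?case
  proof
    assume ax: "(a, x) \<in> r"
    have "\<forall>y\<in>insert a F. (a, y) \<in> r" using aa x(2) tr[OF ax] by auto
    then show ?case by blast
  next
    assume xa: "(x, a) \<in> r"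
    have "\<forall>y\<in>insert a F. (x, y) \<in> r" using xa x(2) by auto
    then show ?case using x(1) by blast
  qed
qed

lemma top_mem:
  assumes "priority_ordering A r" "finite R" "R \<noteq> {}" "R \<subseteq> A"
  shows "top_of r R \<in> R \<and> (\<forall>y\<in>R. (top_of r R, y) \<in> r)"
proof -
  obtain x where "x \<in> R" "\<forall>y\<in>R. (x, y) \<in> r" using top_ex[OF assms] by blast
  moreover have "top_of r R = x" using top_eq[OF assms(1)] calculation by blast
  ultimately show ?thesis by simp
qed

lemma top_restr:
  assumes "restr r B = restr r' B" "R \<subseteq> B"
  shows "top_of r R = top_of r' R"
proof -
  have "\<And>x. (x \<in> R \<and> (\<forall>y\<in>R. (x, y) \<in> r)) = (x \<in> R \<and> (\<forall>y\<in>R. (x, y) \<in> r'))"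
  proof -
    fix x
    show "(x \<in> R \<and> (\<forall>y\<in>R. (x, y) \<in> r)) = (x \<in> R \<and> (\<forall>y\<in>R. (x, y) \<in> r'))"
      using assms unfolding restr_def by blast
  qed
  then show ?thesis unfolding top_of_def by simp
qed

lemma sel_mono: "lex_sel P S k \<subseteq> lex_sel P S (Suc k)"
  by auto

lemma sel_sub:
  assumes "\<forall>j\<in>{1..k}. priority_ordering A (P j)" "S \<subseteq> A" "finite A"
  shows "lex_sel P S k \<subseteq> S"
  using assms(1)
proof (induction k)
  case 0 then show ?case by simp
next
  case (Suc k)
  then have IH: "lex_sel P S k \<subseteq> S" by auto
  have po: "priority_ordering A (P (Suc k))" using Suc.prems by auto
  show ?case
  proof (cases "S - lex_sel P S k = {}")
    case True then show ?thesis using IH by simp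
  next
    case False
    have "finite (S - lex_sel P S k)" using assms finite_subset by blast
    then have "top_of (P (Suc k)) (S - lex_sel P S k) \<in> S - lex_sel P S k"
      using top_mem[OF po _ False] assms(2) by blast
    then show ?thesis using IH False by simp
  qed
qed

lemma sel_inter:
  assumes "\<forall>j\<in>{1..k}. priority_ordering A (P j)" "S \<subseteq> A" "finite A"
  shows "S \<inter> lex_sel P A k \<subseteq> lex_sel P S k"
  using assms(1)
proof (induction k)
  case 0 then show ?case by simp
next
  case (Suc k)
  have pk: "\<forall>j\<in>{1..k}. priority_ordering A (P j)" using Suc.prems by simp
  have IH: "S \<inter> lex_sel P A k \<subseteq> lex_sel P S k" using Suc.IH[OF pk] .
  have po: "priority_ordering A (P (Suc k))" using Suc.prems by simp
  show ?case
  proof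
    fix x assume x: "x \<in> S \<inter> lex_sel P A (Suc k)"
    show "x \<in> lex_sel P S (Suc k)"
    proof (cases "x \<in> lex_sel P A k")
      case True
      then have "x \<in> lex_sel P S k" using IH x by blast
      then show ?thesis using sel_mono[of P S k] by blast
    next
      case False
      have ne: "A - lex_sel P A k \<noteq> {}"
      proof
        assume "A - lex_sel P A k = {}"
        then have "lex_sel P A (Suc k) = lex_sel P A k" by simp
        then show False using x False by blast
      qed
      then have "lex_sel P A (Suc k) = insert (top_of (P (Suc k)) (A - lex_sel P A k)) (lex_sel P A k)"
        by simp
      then have xt: "x = top_of (P (Suc k)) (A - lex_sel P A k)" using x False by blast
      have fin: "finite (A - lex_sel P A k)" using assms by simp
      have top: "\<forall>y\<in>A - lex_sel P A k. (x, y) \<in> P (Suc k)"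
        using top_mem[OF po fin ne] xt by simp
      show ?thesis
      proof (cases "x \<in> lex_sel P S k")
        case True then show ?thesis using sel_mono[of P S k] by blast
      next
        case False
        have xS: "x \<in> S - lex_sel P S k" using x False by blast
        then have ne2: "S - lex_sel P S k \<noteq> {}" by blast
        have sub: "S - lex_sel P S k \<subseteq> A - lex_sel P A k" using IH assms(2) by blast
        have "\<forall>y\<in>S - lex_sel P S k. (x, y) \<in> P (Suc k)" using sub top by blast
        then have "top_of (P (Suc k)) (S - lex_sel P S k) = x"
          using top_eq[OF po xS] by simp
        then show ?thesis using ne2 by simp
      qed
    qed
  qed
qed

lemma sel_same:
  assumes "\<forall>j\<in>{1..k}. priority_ordering A (P j)" "S \<subseteq> A" "finite A"
    "lex_sel P A k \<subseteq> S"
  shows "lex_sel P S k = lex_sel P A k"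
  using assms(1,4)
proof (induction k)
  case 0 then show ?case by simp
next
  case (Suc k)
  have po: "priority_ordering A (P (Suc k))" using Suc.prems by auto
  have IH: "lex_sel P S k = lex_sel P A k" using Suc sel_mono by (meson atLeastAtMost_iff le_SucI order_trans)
  define K where "K = lex_sel P A k"
  show ?case
  proof (cases "A - K = {}")
    case True
    then have "S - K = {}" using assms(2) by blast
    then show ?thesis using True IH K_def by simp
  next
    case False
    have fin: "finite (A - K)" using assms by simp
    define a where "a = top_of (P (Suc k)) (A - K)"
    have a: "a \<in> A - K" "\<forall>y\<in>A - K. (a, y) \<in> P (Suc k)"
      using top_mem[OF po fin False] a_def by auto
    have AS: "lex_sel P A (Suc k) = insert a K" using False a_def K_def by simp
    then have "a \<in> S" using Suc.prems(2) by blast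
    then have ne: "S - K \<noteq> {}" using a by blast
    have "top_of (P (Suc k)) (S - K) = a"
      using top_eq[OF po, of a "S - K"] a \<open>a \<in> S\<close> assms(2) by blast
    then show ?thesis using ne IH AS K_def by simp
  qed
qed

lemma lexD:
  "lexicographic A n C P \<Longrightarrow> S \<subseteq> A \<Longrightarrow> S \<noteq> {} \<Longrightarrow> q \<in> {1..n} \<Longrightarrow> C S q = lex_sel P S q"
  unfolding lexicographic_def by blast

lemma key:
  assumes fin: "finite A" and pp: "priority_profile A n P" and pp': "priority_profile A n P'"
    and lx: "lexicographic A n C P" and lx': "lexicographic A n C P'"
    and k: "k < n"
    and x: "(x, y) \<in> P (Suc k)" "x \<in> A - lex_sel P A k" "y \<in> A - lex_sel P A k"
  shows "(x, y) \<in> P' (Suc k)"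
proof -
  have prof: "\<forall>j\<in>{1..k}. priority_ordering A (P j)" using pp k unfolding priority_profile_def by auto
  have prof': "\<forall>j\<in>{1..k}. priority_ordering A (P' j)" using pp' k unfolding priority_profile_def by auto
  have po: "priority_ordering A (P (Suc k))" using pp k unfolding priority_profile_def by auto
  have po': "priority_ordering A (P' (Suc k))" using pp' k unfolding priority_profile_def by auto
  define K where "K = lex_sel P A k"
  have KK: "lex_sel P' A k = K"
  proof (cases k)
    case 0 then show ?thesis using K_def by simp
  next
    case (Suc m)
    have "A \<noteq> {}" "k \<in> {1..n}" using x k Suc by auto
    then have "C A k = lex_sel P A k" "C A k = lex_sel P' A k"
      using lexD[OF lx] lexD[OF lx'] by blast+
    then show ?thesis using K_def by simp
  qed
  show ?thesis
  proof (cases "x = y")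
    case True
    then show ?thesis using po_refl[OF po'] x by blast
  next
    case False
    define S where "S = K \<union> {x, y}"
    have KA: "K \<subseteq> A" using sel_sub[OF prof _ fin] K_def by blast
    have SA: "S \<subseteq> A" using KA x S_def by auto
    have SK: "S - K = {x, y}" using x S_def K_def by auto
    have s1: "lex_sel P S k = K" using sel_same[OF prof SA fin] K_def S_def by auto
    have s2: "lex_sel P' S k = K" using sel_same[OF prof' SA fin] KK S_def by auto
    have "S \<noteq> {}" "Suc k \<in> {1..n}" using k S_def by auto
    then have "C S (Suc k) = lex_sel P S (Suc k)" "C S (Suc k) = lex_sel P' S (Suc k)"
      using lexD[OF lx _] lexD[OF lx' _] SA by blast+
    then have eq: "lex_sel P S (Suc k) = lex_sel P' S (Suc k)" by simp
    have t1: "top_of (P (Suc k)) {x, y} = x"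
    proof (rule top_eq[OF po])
      have "(x, x) \<in> P (Suc k)" using po_refl[OF po] x by blast
      then show "\<forall>z\<in>{x, y}. (x, z) \<in> P (Suc k)" using x by blast
    qed simp
    have "lex_sel P S (Suc k) = insert x K" using s1 SK t1 by simp
    moreover have "lex_sel P' S (Suc k) = insert (top_of (P' (Suc k)) {x, y}) K" using s2 SK by simp
    moreover have "x \<notin> K" "y \<notin> K" using x K_def by auto
    ultimately have zx: "top_of (P' (Suc k)) {x, y} = x"
    proof -
      let ?z = "top_of (P' (Suc k)) {x, y}"
      have "?z \<in> {x, y}" using top_mem[OF po', of "{x,y}"] x by auto
      moreover have "x \<in> insert ?z K" using eq \<open>lex_sel P S (Suc k) = insert x K\<close>
        \<open>lex_sel P' S (Suc k) = insert ?z K\<close> by (metis insertI1)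
      ultimately show ?thesis using \<open>x \<notin> K\<close> by (metis insertE)
    qed
    have "\<forall>z\<in>{x,y}. (top_of (P' (Suc k)) {x, y}, z) \<in> P' (Suc k)"
      using top_mem[OF po', of "{x,y}"] x by auto
    then show ?thesis using zx by simp
  qed
qed

theorem proposition1:
  fixes A :: "'a set" and n :: nat and C :: "'a set \<Rightarrow> nat \<Rightarrow> 'a set"
    and P P' :: "nat \<Rightarrow> 'a rel"
  assumes "finite A" and "A \<noteq> {}" and "n = card A"
    and "choice_rule A n C"
    and "priority_profile A n P"
    and "lexicographic A n C P"
    and "priority_profile A n P'"
  shows "lexicographic A n C P' \<longleftrightarrow>
           (P 1 = P' 1 \<and>
            (\<forall>t\<in>{1..n}. let At = (if t = 1 then A else A - C A (t - 1))
                         in restr (P t) At = restr (P' t) At))"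
proof -
  have n1: "n \<ge> 1" using assms(1,2,3) by (simp add: Suc_leI card_gt_0_iff)
  have At: "\<And>k. k < n \<Longrightarrow> (if Suc k = 1 then A else A - C A (Suc k - 1)) = A - lex_sel P A k"
  proof -
    fix k assume "k < n"
    then show "(if Suc k = 1 then A else A - C A (Suc k - 1)) = A - lex_sel P A k"
      using assms(2,6) unfolding lexicographic_def by (cases k) auto
  qed
  show ?thesis
  proof
    assume lx': "lexicographic A n C P'"
    have R: "\<And>k. k < n \<Longrightarrow> restr (P (Suc k)) (A - lex_sel P A k) = restr (P' (Suc k)) (A - lex_sel P A k)"
    proof -
      fix k assume k: "k < n"
      have KK: "lex_sel P' A k = lex_sel P A k"
      proof (cases k)
        case 0 then show ?thesis by simp
      next
        case (Suc m)
        have "A \<subseteq> A \<and> A \<noteq> {} \<and> k \<in> {1..n}" using assms(2) k Suc by auto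
        then have "C A k = lex_sel P A k" "C A k = lex_sel P' A k"
          using assms(6) lx' unfolding lexicographic_def by blast+
        then show ?thesis by simp
      qed
      show "restr (P (Suc k)) (A - lex_sel P A k) = restr (P' (Suc k)) (A - lex_sel P A k)"
        unfolding restr_def
        using key[OF assms(1,5,7,6) lx' k] key[OF assms(1,7,5) lx' assms(6) k] KK by auto
    qed
    have "restr (P 1) A = restr (P' 1) A" using R[of 0] n1 by simp
    moreover have "P 1 \<subseteq> A \<times> A" "P' 1 \<subseteq> A \<times> A"
    proof -
      have "priority_ordering A (P 1)" "priority_ordering A (P' 1)"
        using assms(5,7) n1 unfolding priority_profile_def by auto
      then show "P 1 \<subseteq> A \<times> A" "P' 1 \<subseteq> A \<times> A" using po_sub by blast+
    qed
    ultimately have "P 1 = P' 1" unfolding restr_def by blast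
    moreover have "\<forall>t\<in>{1..n}. let At = (if t = 1 then A else A - C A (t - 1))
                         in restr (P t) At = restr (P' t) At"
    proof
      fix t assume t: "t \<in> {1..n}"
      then obtain k where tk: "t = Suc k" "k < n" by (cases t) auto
      show "let At = (if t = 1 then A else A - C A (t - 1)) in restr (P t) At = restr (P' t) At"
      proof -
        have e: "(if t = 1 then A else A - C A (t - 1)) = A - lex_sel P A k"
          using At[OF tk(2)] tk(1) by (metis diff_Suc_1)
        show ?thesis unfolding Let_def e using R[OF tk(2)] tk(1) by simp
      qed
    qed
    ultimately show "P 1 = P' 1 \<and> (\<forall>t\<in>{1..n}. let At = (if t = 1 then A else A - C A (t - 1))
                         in restr (P t) At = restr (P' t) At)" by blast
  next
    assume H: "P 1 = P' 1 \<and> (\<forall>t\<in>{1..n}. let At = (if t = 1 then A else A - C A (t - 1))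
                         in restr (P t) At = restr (P' t) At)"
    have R: "\<And>k. k < n \<Longrightarrow> restr (P (Suc k)) (A - lex_sel P A k) = restr (P' (Suc k)) (A - lex_sel P A k)"
    proof -
      fix k assume k: "k < n"
      then have "Suc k \<in> {1..n}" by simp
      then have "let At = (if Suc k = 1 then A else A - C A (Suc k - 1))
                         in restr (P (Suc k)) At = restr (P' (Suc k)) At" using H by blast
      then show "restr (P (Suc k)) (A - lex_sel P A k) = restr (P' (Suc k)) (A - lex_sel P A k)"
        unfolding Let_def At[OF k] .
    qed
    have prof: "\<forall>j\<in>{1..n}. priority_ordering A (P j)" using assms(5) unfolding priority_profile_def by auto
    show "lexicographic A n C P'"
      unfolding lexicographic_def
    proof (intro allI impI)
      fix S q assume Sq: "S \<subseteq> A \<and> S \<noteq> {} \<and> q \<in> {1..n}"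
      have "\<And>k. k \<le> n \<Longrightarrow> lex_sel P S k = lex_sel P' S k"
      proof -
        fix k show "k \<le> n \<Longrightarrow> lex_sel P S k = lex_sel P' S k"
        proof (induction k)
          case 0 then show ?case by simp
        next
          case (Suc k)
          then have IH: "lex_sel P S k = lex_sel P' S k" and k: "k < n" by auto
          have prk: "\<forall>j\<in>{1..k}. priority_ordering A (P j)" using prof k by auto
          have "S \<inter> lex_sel P A k \<subseteq> lex_sel P S k" using sel_inter[OF prk _ assms(1)] Sq by blast
          then have sub: "S - lex_sel P S k \<subseteq> A - lex_sel P A k" using Sq by blast
          have "top_of (P (Suc k)) (S - lex_sel P S k) = top_of (P' (Suc k)) (S - lex_sel P S k)"
            using top_restr[OF R[OF k] sub] .
          then show ?case using IH by simp
        qed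
      qed
      then show "C S q = lex_sel P' S q" using assms(6) Sq unfolding lexicographic_def by auto
    qed
  qed
qed

end
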